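(* Let $R$ be a commutative ring with $\mathbb{Q}\subseteq R$. Let $\mathcal{E}$ (resp. $\mathcal{F}$) be a finitely generated projective module over a commutative unital $R$-algebra $\mathcal{A}$ (resp. $\mathcal{B}$), with a symmetric, strongly nondegenerate, full inner product $\langle\cdot,\cdot\rangle_{\mathcal{E}}$ (resp. $\langle\cdot,\cdot\rangle_{\mathcal{F}}$). Let $m\in\mathcal{C}^3(\mathcal{E})$ be a Courant algebroid structure on $\mathcal{E}$. Let $\Phi:\mathcal{C}^\bullet(\mathcal{E})\to\mathcal{C}^\bullet(\mathcal{F})$ be a morphism of graded Poisson algebras, i.e. a homogeneous $R$-linear map of degree $0$ compatible with the products $\wedge$ and the brackets $[\cdot,\cdot]$, and write $\Phi_k=\Phi|_{\mathcal{C}^k(\mathcal{E})}$. Then: (i) $m'=\Phi(m)$ is a Courant algebroid structure on $\mathcal{F}$; (ii) $(\Phi_0,\Phi_1)$ is a morphism of Courant algebroids from $(\mathcal{E},m)$ to $(\mathcal{F},m')$; (iii) $\Phi$ induces a morphism $H^\bullet(\mathcal{C}(\mathcal{E}),\delta_m)\to H^\bullet(\mathcal{C}(\mathcal{F}),\delta_{m'})$ of cohomologies.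
   Context: Strongly nondegenerate: $\mathcal{E}\to\operatorname{Hom}_{\mathcal{A}}(\mathcal{E},\mathcal{A})$ is an isomorphism. Full: every element of the algebra is a finite sum $\sum_i\langle x_i,y_i\rangle$. $\operatorname{Der}(\mathcal{A})$: $R$-linear derivations. $\mathcal{C}^0(\mathcal{E})=\mathcal{A}$ and $\mathcal{C}^1(\mathcal{E})=\mathcal{E}$. For $r\ge2$, $\mathcal{C}^r(\mathcal{E})$ is the set of $\mathsf{C}\in\operatorname{Hom}_R(\mathcal{E}^{\otimes_R(r-1)},\mathcal{E})$ admitting an $R$-multilinear symbol $\sigma_{\mathsf{C}}:\mathcal{E}^{\otimes(r-2)}\to\operatorname{Der}(\mathcal{A})$ with two properties: (1) $\sigma_{\mathsf{C}}(x_1,\dots,x_{r-2})\langle u,w\rangle=\langle\mathsf{C}(x_1,\dots,x_{r-2},u),w\rangle+\langle u,\mathsf{C}(x_1,\dots,x_{r-2},w)\rangle$; (2) for $r\ge3$ and $1\le i\le r-2$, $\langle\mathsf{C}(\dots,x_i,x_{i+1},\dots)+\mathsf{C}(\dots,x_{i+1},x_i,\dots),u\rangle=\sigma_{\mathsf{C}}(x_1,\dots,\widehat{x_i},\widehat{x_{i+1}},\dots,x_{r-1},u)\langle x_i,x_{i+1}\rangle$. The same definitions apply to $\mathcal{F}$ over $\mathcal{B}$. $i_x\mathsf{C}$ inserts $x$ in the first argument. $[\cdot,\cdot]$ is the unique $R$-bilinear graded skew-symmetric map $\mathcal{C}^r\times\mathcal{C}^s\to\mathcal{C}^{r+s-2}$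 with: - $[a,b]=0$ and $[a,x]=0=[x,a]$; - $[x,y]=\langle x,y\rangle$; - $[\mathsf{D},a]=\sigma_{\mathsf{D}}(a)=-[a,\mathsf{D}]$ for $\mathsf{D}\in\mathcal{C}^2$; - $[\mathsf{C},x]=i_x\mathsf{C}=(-1)^{r+1}[x,\mathsf{C}]$ for $r\ge2$; - $[[\mathsf{C}_1,\mathsf{C}_2],x]=(-1)^s[[\mathsf{C}_1,x],\mathsf{C}_2]+[\mathsf{C}_1,[\mathsf{C}_2,x]]$. $\wedge$ is the unique degree-$0$ product with $a\wedge b=ab$, $a\wedge x=ax=x\wedge a$, and $[\mathsf{C}_1\wedge\mathsf{C}_2,x]=(-1)^s[\mathsf{C}_1,x]\wedge\mathsf{C}_2+\mathsf{C}_1\wedge[\mathsf{C}_2,x]$. These make $\mathcal{C}^\bullet$ a graded Poisson algebra of degree $-2$. A Courant algebroid structure on $\mathcal{E}$ is an element $m\in\mathcal{C}^3(\mathcal{E})$, i.e. a bracket $m:\mathcal{E}\otimes_R\mathcal{E}\to\mathcal{E}$ with anchor $\sigma_m:\mathcal{E}\to\operatorname{Der}(\mathcal{A})$, satisfying the Jacobi identity $m(x,m(y,z))=m(m(x,y),z)+m(y,m(x,z))$. Equivalently, $m\in\mathcal{C}^3(\mathcal{E})$ with $[m,m]=0$. Then $\delta_m=[m,\cdot]$ satisfies $\delta_m^2=0$, and $H^\bullet(\mathcal{C}(\mathcal{E}),\delta_m)$ denotes the cohomology of $(\mathcal{C}^\bullet(\mathcal{E}),\delta_m)$. A morphism of Courant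 algebroids $(\mathcal{E}_1,[\cdot,\cdot]_1,\sigma_1)\to(\mathcal{E}_2,[\cdot,\cdot]_2,\sigma_2)$ over $\mathcal{A}_1,\mathcal{A}_2$ is a pair of $R$-linear maps $(\phi:\mathcal{A}_1\to\mathcal{A}_2,\ \psi:\mathcal{E}_1\to\mathcal{E}_2)$ satisfying, for all $a,b\in\mathcal{A}_1$ and $x,y\in\mathcal{E}_1$: - $\phi(ab)=\phi(a)\phi(b)$; - $\psi(ax)=\phi(a)\psi(x)$; - $\psi([x,y]_1)=[\psi(x),\psi(y)]_2$; - $\phi(\sigma_1(x)a)=\sigma_2(\psi(x))\phi(a)$; - $\phi(\langle x,y\rangle_1)=\langle\psi(x),\psi(y)\rangle_2$. *)

theory Defs
  imports Main
begin

record ('r, 'a, 'e) ipm =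
  alg  :: "'r \<Rightarrow> 'a"
  smul :: "'a \<Rightarrow> 'e \<Rightarrow> 'e"
  ip   :: "'e \<Rightarrow> 'e \<Rightarrow> 'a"

definition contains_rationals :: "'r::comm_ring_1 itself \<Rightarrow> bool" where
  "contains_rationals _ \<longleftrightarrow> (\<forall>n::nat. n > 0 \<longrightarrow> (\<exists>y::'r. of_nat n * y = 1))"

definition comm_algebra :: "('r::comm_ring_1, 'a::comm_ring_1, 'e) ipm \<Rightarrow> bool" where
  "comm_algebra S \<longleftrightarrow>
     (\<forall>r s. alg S (r + s) = alg S r + alg S s) \<and>
     (\<forall>r s. alg S (r * s) = alg S r * alg S s) \<and> alg S 1 = 1"

definition is_module :: "('r, 'a::comm_ring_1, 'e::ab_group_add) ipm \<Rightarrow> bool" where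
  "is_module S \<longleftrightarrow>
     (\<forall>a x y. smul S a (x + y) = smul S a x + smul S a y) \<and>
     (\<forall>a b x. smul S (a + b) x = smul S a x + smul S b x) \<and>
     (\<forall>a b x. smul S (a * b) x = smul S a (smul S b x)) \<and>
     (\<forall>x. smul S 1 x = x)"

text \<open>Finitely generated projective: a direct summand of a finite free module A^n
  (vectors nat => A supported in {..<n}).\<close>
definition fg_projective :: "('r, 'a::comm_ring_1, 'e::ab_group_add) ipm \<Rightarrow> bool" where
  "fg_projective S \<longleftrightarrow>
     (\<exists>(n::nat) (i::'e \<Rightarrow> nat \<Rightarrow> 'a) (p::(nat \<Rightarrow> 'a) \<Rightarrow> 'e).
        (\<forall>x k. n \<le> k \<longrightarrow> i x k = 0) \<and>
        (\<forall>x y. i (x + y) = (\<lambda>k. i x k + i y k)) \<and>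
        (\<forall>a x. i (smul S a x) = (\<lambda>k. a * i x k)) \<and>
        (\<forall>v w. p (\<lambda>k. v k + w k) = p v + p w) \<and>
        (\<forall>a v. p (\<lambda>k. a * v k) = smul S a (p v)) \<and>
        (\<forall>x. p (i x) = x))"

definition A_linear_form :: "('r, 'a::comm_ring_1, 'e::ab_group_add) ipm \<Rightarrow> ('e \<Rightarrow> 'a) \<Rightarrow> bool" where
  "A_linear_form S \<phi> \<longleftrightarrow> (\<forall>x y. \<phi> (x + y) = \<phi> x + \<phi> y) \<and> (\<forall>a x. \<phi> (smul S a x) = a * \<phi> x)"

definition ip_symmetric_bilinear :: "('r, 'a::comm_ring_1, 'e::ab_group_add) ipm \<Rightarrow> bool" where
  "ip_symmetric_bilinear S \<longleftrightarrow>
     (\<forall>x y. ip S x y = ip S y x) \<and> (\<forall>y. A_linear_form S (\<lambda>x. ip S x y))"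

definition strongly_nondegenerate :: "('r, 'a::comm_ring_1, 'e::ab_group_add) ipm \<Rightarrow> bool" where
  "strongly_nondegenerate S \<longleftrightarrow>
     (\<forall>\<phi>. A_linear_form S \<phi> \<longrightarrow> (\<exists>!x. \<forall>y. \<phi> y = ip S x y))"

definition ip_full :: "('r, 'a::comm_ring_1, 'e::ab_group_add) ipm \<Rightarrow> bool" where
  "ip_full S \<longleftrightarrow> (\<forall>a. \<exists>ps. a = sum_list (map (\<lambda>(x, y). ip S x y) ps))"

definition ipmod :: "('r::comm_ring_1, 'a::comm_ring_1, 'e::ab_group_add) ipm \<Rightarrow> bool" where
  "ipmod S \<longleftrightarrow> comm_algebra S \<and> is_module S \<and> fg_projective S \<and>
     ip_symmetric_bilinear S \<and> strongly_nondegenerate S \<and> ip_full S"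

definition is_der :: "('r, 'a::comm_ring_1, 'e) ipm \<Rightarrow> ('a \<Rightarrow> 'a) \<Rightarrow> bool" where
  "is_der S D \<longleftrightarrow> (\<forall>a b. D (a + b) = D a + D b) \<and>
     (\<forall>r a. D (alg S r * a) = alg S r * D a) \<and>
     (\<forall>a b. D (a * b) = D a * b + a * D b)"

definition R_multilinear :: "('r, 'a, 'e::ab_group_add) ipm \<Rightarrow> nat \<Rightarrow> ('e list \<Rightarrow> 'e) \<Rightarrow> bool" where
  "R_multilinear S n f \<longleftrightarrow>
     (\<forall>xs i x y. length xs = n \<and> i < n \<longrightarrow>
        f (xs[i := x + y]) = f (xs[i := x]) + f (xs[i := y])) \<and>
     (\<forall>xs i x t. length xs = n \<and> i < n \<longrightarrow>
        f (xs[i := smul S (alg S t) x]) = smul S (alg S t) (f (xs[i := x])))"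

definition is_symbol :: "('r, 'a::comm_ring_1, 'e::ab_group_add) ipm \<Rightarrow> nat \<Rightarrow> ('e list \<Rightarrow> 'e)
    \<Rightarrow> ('e list \<Rightarrow> 'a \<Rightarrow> 'a) \<Rightarrow> bool" where
  "is_symbol S r f \<sigma> \<longleftrightarrow>
     (\<forall>xs i x y a. length xs = r - 2 \<and> i < r - 2 \<longrightarrow>
        \<sigma> (xs[i := x + y]) a = \<sigma> (xs[i := x]) a + \<sigma> (xs[i := y]) a) \<and>
     (\<forall>xs i x t a. length xs = r - 2 \<and> i < r - 2 \<longrightarrow>
        \<sigma> (xs[i := smul S (alg S t) x]) a = alg S t * \<sigma> (xs[i := x]) a) \<and>
     (\<forall>xs. length xs = r - 2 \<longrightarrow> is_der S (\<sigma> xs)) \<and>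
     (\<forall>xs u w. length xs = r - 2 \<longrightarrow>
        \<sigma> xs (ip S u w) = ip S (f (xs @ [u])) w + ip S u (f (xs @ [w]))) \<and>
     (\<forall>xs u i. length xs = r - 1 \<and> i + 1 < r - 1 \<longrightarrow>
        ip S (f xs + f (xs[i := xs ! (i + 1), i + 1 := xs ! i])) u =
        \<sigma> (take i xs @ drop (i + 2) xs @ [u]) (ip S (xs ! i) (xs ! (i + 1))))"

text \<open>An element of C^r(E), r >= 2, represented as a function on lists of length r-1,
  extended by 0 to all other lists.\<close>
definition is_cochain :: "('r, 'a::comm_ring_1, 'e::ab_group_add) ipm \<Rightarrow> nat \<Rightarrow> ('e list \<Rightarrow> 'e) \<Rightarrow> bool" where
  "is_cochain S r f \<longleftrightarrow> 2 \<le> r \<and>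
     (\<forall>xs. length xs \<noteq> r - 1 \<longrightarrow> f xs = 0) \<and>
     R_multilinear S (r - 1) f \<and> (\<exists>\<sigma>. is_symbol S r f \<sigma>)"

text \<open>Homogeneous elements of C^\<bullet>(E). CNeg k is the (only) element of the zero space
  C^k(E) for k < 0 (convention C^k = 0 for negative k).\<close>
datatype ('a, 'e) cochain = CNeg int | C0 'a | C1 'e | CHi nat "'e list \<Rightarrow> 'e"

definition cset :: "('r, 'a::comm_ring_1, 'e::ab_group_add) ipm \<Rightarrow> int \<Rightarrow> ('a, 'e) cochain set" where
  "cset S k = (if k < 0 then {CNeg k} else if k = 0 then range C0 else if k = 1 then range C1
               else {CHi (nat k) f | f. is_cochain S (nat k) f})"

fun cadd :: "('a::comm_ring_1, 'e::ab_group_add) cochain \<Rightarrow> ('a, 'e) cochain \<Rightarrow> ('a, 'e) cochain" where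
  "cadd (CNeg k) (CNeg l) = CNeg k"
| "cadd (C0 a) (C0 b) = C0 (a + b)"
| "cadd (C1 x) (C1 y) = C1 (x + y)"
| "cadd (CHi r f) (CHi s g) = CHi r (\<lambda>xs. f xs + g xs)"
| "cadd _ _ = undefined"

fun cuminus :: "('a::comm_ring_1, 'e::ab_group_add) cochain \<Rightarrow> ('a, 'e) cochain" where
  "cuminus (CNeg k) = CNeg k"
| "cuminus (C0 a) = C0 (- a)"
| "cuminus (C1 x) = C1 (- x)"
| "cuminus (CHi r f) = CHi r (\<lambda>xs. - f xs)"

fun cscal :: "('r, 'a::comm_ring_1, 'e::ab_group_add) ipm \<Rightarrow> 'r \<Rightarrow> ('a, 'e) cochain \<Rightarrow> ('a, 'e) cochain" where
  "cscal S t (CNeg k) = CNeg k"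
| "cscal S t (C0 a) = C0 (alg S t * a)"
| "cscal S t (C1 x) = C1 (smul S (alg S t) x)"
| "cscal S t (CHi r f) = CHi r (\<lambda>xs. smul S (alg S t) (f xs))"

definition czero :: "int \<Rightarrow> ('a::comm_ring_1, 'e::ab_group_add) cochain" where
  "czero k = (if k < 0 then CNeg k else if k = 0 then C0 0 else if k = 1 then C1 0
              else CHi (nat k) (\<lambda>_. 0))"

definition csign :: "int \<Rightarrow> ('a::comm_ring_1, 'e::ab_group_add) cochain \<Rightarrow> ('a, 'e) cochain" where
  "csign n c = (if even n then c else cuminus c)"

fun ins :: "'e \<Rightarrow> ('a, 'e) cochain \<Rightarrow> ('a, 'e) cochain" where
  "ins x (CHi r f) = (if r = 2 then C1 (f [x]) else CHi (r - 1) (\<lambda>xs. f (x # xs)))"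
| "ins x _ = undefined"

fun chfun :: "('a, 'e) cochain \<Rightarrow> 'e list \<Rightarrow> 'e" where
  "chfun (CHi r f) = f"
| "chfun _ = undefined"

fun c0val :: "('a, 'e) cochain \<Rightarrow> 'a" where
  "c0val (C0 a) = a"
| "c0val _ = undefined"

fun c1val :: "('a, 'e) cochain \<Rightarrow> 'e" where
  "c1val (C1 x) = x"
| "c1val _ = undefined"

definition bracket_ax :: "('r::comm_ring_1, 'a::comm_ring_1, 'e::ab_group_add) ipm
    \<Rightarrow> (('a, 'e) cochain \<Rightarrow> ('a, 'e) cochain \<Rightarrow> ('a, 'e) cochain) \<Rightarrow> bool" where
  "bracket_ax S br \<longleftrightarrow>
     (\<forall>r s c d. 0 \<le> r \<and> 0 \<le> s \<and> c \<in> cset S r \<and> d \<in> cset S s \<longrightarrow> br c d \<in> cset S (r + s - 2)) \<and>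
     (\<forall>k s d. k < 0 \<and> 0 \<le> s \<and> d \<in> cset S s \<longrightarrow>
        br (CNeg k) d = czero (k + s - 2) \<and> br d (CNeg k) = czero (s + k - 2)) \<and>
     (\<forall>r s c c' d. 0 \<le> r \<and> 0 \<le> s \<and> c \<in> cset S r \<and> c' \<in> cset S r \<and> d \<in> cset S s \<longrightarrow>
        br (cadd c c') d = cadd (br c d) (br c' d) \<and> br d (cadd c c') = cadd (br d c) (br d c')) \<and>
     (\<forall>r s t c d. 0 \<le> r \<and> 0 \<le> s \<and> c \<in> cset S r \<and> d \<in> cset S s \<longrightarrow>
        br (cscal S t c) d = cscal S t (br c d) \<and> br d (cscal S t c) = cscal S t (br d c)) \<and>
     (\<forall>r s c d. 0 \<le> r \<and> 0 \<le> s \<and> c \<in> cset S r \<and> d \<in> cset S s \<longrightarrow>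
        br c d = csign (r * s + 1) (br d c)) \<and>
     (\<forall>x y. br (C1 x) (C1 y) = C0 (ip S x y)) \<and>
     (\<forall>f \<sigma> a. is_cochain S 2 f \<and> is_symbol S 2 f \<sigma> \<longrightarrow>
        br (CHi 2 f) (C0 a) = C0 (\<sigma> [] a) \<and> br (C0 a) (CHi 2 f) = C0 (- \<sigma> [] a)) \<and>
     (\<forall>r f x. is_cochain S r f \<longrightarrow>
        br (CHi r f) (C1 x) = ins x (CHi r f) \<and>
        br (C1 x) (CHi r f) = csign (int r + 1) (ins x (CHi r f))) \<and>
     (\<forall>r s c1 c2 x. 0 \<le> r \<and> 0 \<le> s \<and> c1 \<in> cset S r \<and> c2 \<in> cset S s \<longrightarrow>
        br (br c1 c2) (C1 x) =
          cadd (csign s (br (br c1 (C1 x)) c2)) (br c1 (br c2 (C1 x))))"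

definition wedge_ax :: "('r::comm_ring_1, 'a::comm_ring_1, 'e::ab_group_add) ipm
    \<Rightarrow> (('a, 'e) cochain \<Rightarrow> ('a, 'e) cochain \<Rightarrow> ('a, 'e) cochain)
    \<Rightarrow> (('a, 'e) cochain \<Rightarrow> ('a, 'e) cochain \<Rightarrow> ('a, 'e) cochain) \<Rightarrow> bool" where
  "wedge_ax S br wd \<longleftrightarrow>
     (\<forall>r s c d. 0 \<le> r \<and> 0 \<le> s \<and> c \<in> cset S r \<and> d \<in> cset S s \<longrightarrow> wd c d \<in> cset S (r + s)) \<and>
     (\<forall>k s d. k < 0 \<and> 0 \<le> s \<and> d \<in> cset S s \<longrightarrow>
        wd (CNeg k) d = czero (k + s) \<and> wd d (CNeg k) = czero (s + k)) \<and>
     (\<forall>r s c c' d. 0 \<le> r \<and> 0 \<le> s \<and> c \<in> cset S r \<and> c' \<in> cset S r \<and> d \<in> cset S s \<longrightarrow>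
        wd (cadd c c') d = cadd (wd c d) (wd c' d) \<and> wd d (cadd c c') = cadd (wd d c) (wd d c')) \<and>
     (\<forall>r s t c d. 0 \<le> r \<and> 0 \<le> s \<and> c \<in> cset S r \<and> d \<in> cset S s \<longrightarrow>
        wd (cscal S t c) d = cscal S t (wd c d) \<and> wd d (cscal S t c) = cscal S t (wd d c)) \<and>
     (\<forall>a b. wd (C0 a) (C0 b) = C0 (a * b)) \<and>
     (\<forall>a x. wd (C0 a) (C1 x) = C1 (smul S a x) \<and> wd (C1 x) (C0 a) = C1 (smul S a x)) \<and>
     (\<forall>r s c1 c2 x. 0 \<le> r \<and> 0 \<le> s \<and> c1 \<in> cset S r \<and> c2 \<in> cset S s \<longrightarrow>
        br (wd c1 c2) (C1 x) =
          cadd (csign s (wd (br c1 (C1 x)) c2)) (wd c1 (br c2 (C1 x))))"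

definition courant :: "('r::comm_ring_1, 'a::comm_ring_1, 'e::ab_group_add) ipm \<Rightarrow> ('a, 'e) cochain \<Rightarrow> bool" where
  "courant S m \<longleftrightarrow> m \<in> cset S 3 \<and>
     (\<forall>x y z. chfun m [x, chfun m [y, z]] =
                chfun m [chfun m [x, y], z] + chfun m [y, chfun m [x, z]])"

definition courant_morphism ::
  "('r::comm_ring_1, 'a::comm_ring_1, 'e::ab_group_add) ipm \<Rightarrow> ('r, 'b::comm_ring_1, 'f::ab_group_add) ipm
   \<Rightarrow> ('e \<Rightarrow> 'e \<Rightarrow> 'e) \<Rightarrow> ('e \<Rightarrow> 'a \<Rightarrow> 'a) \<Rightarrow> ('f \<Rightarrow> 'f \<Rightarrow> 'f) \<Rightarrow> ('f \<Rightarrow> 'b \<Rightarrow> 'b)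
   \<Rightarrow> ('a \<Rightarrow> 'b) \<Rightarrow> ('e \<Rightarrow> 'f) \<Rightarrow> bool" where
  "courant_morphism S1 S2 br1 an1 br2 an2 \<phi> \<psi> \<longleftrightarrow>
     (\<forall>a b. \<phi> (a + b) = \<phi> a + \<phi> b) \<and> (\<forall>t a. \<phi> (alg S1 t * a) = alg S2 t * \<phi> a) \<and>
     (\<forall>x y. \<psi> (x + y) = \<psi> x + \<psi> y) \<and>
     (\<forall>t x. \<psi> (smul S1 (alg S1 t) x) = smul S2 (alg S2 t) (\<psi> x)) \<and>
     (\<forall>a b. \<phi> (a * b) = \<phi> a * \<phi> b) \<and>
     (\<forall>a x. \<psi> (smul S1 a x) = smul S2 (\<phi> a) (\<psi> x)) \<and>
     (\<forall>x y. \<psi> (br1 x y) = br2 (\<psi> x) (\<psi> y)) \<and>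
     (\<forall>x a. \<phi> (an1 x a) = an2 (\<psi> x) (\<phi> a)) \<and>
     (\<forall>x y. \<phi> (ip S1 x y) = ip S2 (\<psi> x) (\<psi> y))"

definition gpa_morphism ::
  "('r::comm_ring_1, 'a::comm_ring_1, 'e::ab_group_add) ipm \<Rightarrow> ('r, 'b::comm_ring_1, 'f::ab_group_add) ipm
   \<Rightarrow> (('a, 'e) cochain \<Rightarrow> ('a, 'e) cochain \<Rightarrow> ('a, 'e) cochain)
   \<Rightarrow> (('a, 'e) cochain \<Rightarrow> ('a, 'e) cochain \<Rightarrow> ('a, 'e) cochain)
   \<Rightarrow> (('b, 'f) cochain \<Rightarrow> ('b, 'f) cochain \<Rightarrow> ('b, 'f) cochain)
   \<Rightarrow> (('b, 'f) cochain \<Rightarrow> ('b, 'f) cochain \<Rightarrow> ('b, 'f) cochain)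
   \<Rightarrow> (('a, 'e) cochain \<Rightarrow> ('b, 'f) cochain) \<Rightarrow> bool" where
  "gpa_morphism S1 S2 br1 wd1 br2 wd2 \<Phi> \<longleftrightarrow>
     (\<forall>k::nat. \<forall>c \<in> cset S1 (int k). \<Phi> c \<in> cset S2 (int k)) \<and>
     (\<forall>k::nat. \<forall>c \<in> cset S1 (int k). \<forall>c' \<in> cset S1 (int k). \<Phi> (cadd c c') = cadd (\<Phi> c) (\<Phi> c')) \<and>
     (\<forall>k::nat. \<forall>t. \<forall>c \<in> cset S1 (int k). \<Phi> (cscal S1 t c) = cscal S2 t (\<Phi> c)) \<and>
     (\<forall>r s::nat. \<forall>c \<in> cset S1 (int r). \<forall>d \<in> cset S1 (int s). \<Phi> (wd1 c d) = wd2 (\<Phi> c) (\<Phi> d)) \<and>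
     (\<forall>r s::nat. 2 \<le> r + s \<longrightarrow> (\<forall>c \<in> cset S1 (int r). \<forall>d \<in> cset S1 (int s).
        \<Phi> (br1 c d) = br2 (\<Phi> c) (\<Phi> d)))"

text \<open>Phi induces a (well-defined) map H^k(C(E),delta1) -> H^k(C(F),delta2) for every k:
  it maps k-cocycles to k-cocycles and k-coboundaries to k-coboundaries.\<close>
definition induces_cohomology_map ::
  "('r::comm_ring_1, 'a::comm_ring_1, 'e::ab_group_add) ipm \<Rightarrow> ('r, 'b::comm_ring_1, 'f::ab_group_add) ipm
   \<Rightarrow> (('a, 'e) cochain \<Rightarrow> ('a, 'e) cochain) \<Rightarrow> (('b, 'f) cochain \<Rightarrow> ('b, 'f) cochain)
   \<Rightarrow> (('a, 'e) cochain \<Rightarrow> ('b, 'f) cochain) \<Rightarrow> bool" where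
  "induces_cohomology_map S1 S2 \<delta>1 \<delta>2 \<Phi> \<longleftrightarrow>
     (\<forall>k::nat. \<forall>c \<in> cset S1 (int k). \<delta>1 c = czero (int k + 1) \<longrightarrow> \<delta>2 (\<Phi> c) = czero (int k + 1)) \<and>
     (\<forall>k::nat. \<forall>b \<in> cset S1 (int k). \<exists>b' \<in> cset S2 (int k). \<Phi> (\<delta>1 b) = \<delta>2 b')"

end

theory Submission
  imports Defs
begin

context
  fixes S :: "('r::comm_ring_1, 'a::comm_ring_1, 'e::ab_group_add) ipm"
    and br :: "('a, 'e) cochain \<Rightarrow> ('a, 'e) cochain \<Rightarrow> ('a, 'e) cochain"
begin

lemma ba_mem: "bracket_ax S br \<Longrightarrow> 0\<le>(r::int) \<Longrightarrow> 0\<le>(s::int) \<Longrightarrow> c\<in>cset S r \<Longrightarrow> d\<in>cset S s \<Longrightarrow> br c d \<in> cset S (r+s-2)"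
  unfolding bracket_ax_def by (elim conjE) meson
lemma ba_skew: "bracket_ax S br \<Longrightarrow> 0\<le>(r::int) \<Longrightarrow> 0\<le>(s::int) \<Longrightarrow> c\<in>cset S r \<Longrightarrow> d\<in>cset S s \<Longrightarrow> br c d = csign (r*s+1) (br d c)"
  unfolding bracket_ax_def by (elim conjE) meson
lemma ba_ins1: "bracket_ax S br \<Longrightarrow> is_cochain S r f \<Longrightarrow> br (CHi r f) (C1 x) = ins x (CHi r f)"
  unfolding bracket_ax_def by (elim conjE) meson
lemma ba_ins2: "bracket_ax S br \<Longrightarrow> is_cochain S r f \<Longrightarrow> br (C1 x) (CHi r f) = csign (int r + 1) (ins x (CHi r f))"
  unfolding bracket_ax_def by (elim conjE) meson
lemma ba_leib: "bracket_ax S br \<Longrightarrow> 0\<le>(r::int) \<Longrightarrow> 0\<le>(s::int) \<Longrightarrow> c1\<in>cset S r \<Longrightarrow> c2\<in>cset S s \<Longrightarrow>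
   br (br c1 c2) (C1 x) = cadd (csign s (br (br c1 (C1 x)) c2)) (br c1 (br c2 (C1 x)))"
  unfolding bracket_ax_def by (elim conjE) meson
lemma ba_ip: "bracket_ax S br \<Longrightarrow> br (C1 x) (C1 y) = C0 (ip S x y)"
  unfolding bracket_ax_def by (elim conjE) meson
lemma ba_sym2: "bracket_ax S br \<Longrightarrow> is_cochain S 2 f \<Longrightarrow> is_symbol S 2 f \<sigma> \<Longrightarrow> br (CHi 2 f) (C0 a) = C0 (\<sigma> [] a)"
  unfolding bracket_ax_def by (elim conjE) meson

lemma cset_hi: "2 \<le> n \<Longrightarrow> c \<in> cset S (int n) \<Longrightarrow> \<exists>f. c = CHi n f \<and> is_cochain S n f"
  by (auto simp: cset_def)
lemma cset_hi_iff: "2 \<le> n \<Longrightarrow> CHi n f \<in> cset S (int n) \<longleftrightarrow> is_cochain S n f"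
  by (auto simp: cset_def)
lemma cset1: "c \<in> cset S 1 \<longleftrightarrow> (\<exists>x. c = C1 x)"
  by (auto simp: cset_def)
lemma cset0: "c \<in> cset S 0 \<longleftrightarrow> (\<exists>x. c = C0 x)"
  by (auto simp: cset_def)
lemma C1_mem: "C1 x \<in> cset S 1" by (simp add: cset1)
lemma C0_mem: "C0 x \<in> cset S 0" by (simp add: cset0)

lemma jac:
  fixes f :: "'e list \<Rightarrow> 'e"
  assumes B: "bracket_ax S br" and cf: "is_cochain S 3 f"
  shows "br (CHi 3 f) (CHi 3 f) \<in> cset S 4 \<and>
    chfun (br (CHi 3 f) (CHi 3 f)) [x,y,z] =
      - (- f [f[x,y],z] + (- f[y,f[x,z]] + f[x,f[y,z]])) + - (- f [f[x,y],z] + (- f[y,f[x,z]] + f[x,f[y,z]]))"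
proof -
  define C :: "('a,'e) cochain" where "C = CHi 3 f"
  have Cm: "C \<in> cset S 3" using cf cset_hi_iff[of 3 f] by (simp add: C_def)
  have D: "br C (C1 w) = CHi 2 (\<lambda>xs. f (w#xs))" for w
    using ba_ins1[OF B cf] by (simp add: C_def)
  have Dm: "CHi 2 (\<lambda>xs. f (w#xs)) \<in> cset S 2" for w
    using ba_mem[OF B _ _ Cm C1_mem, of w] D[of w] by simp
  have Dc: "is_cochain S 2 (\<lambda>xs. f (w#xs))" for w
    using Dm[of w] cset_hi_iff[of 2 _] by simp
  have D1: "br (CHi 2 (\<lambda>xs. f (w#xs))) (C1 v) = C1 (f [w,v])" for w v
    using ba_ins1[OF B Dc] by simp
  have D2: "br (C1 v) (CHi 2 (\<lambda>xs. f (w#xs))) = C1 (- f [w,v])" for w v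
    using ba_ins2[OF B Dc] by (simp add: csign_def)
  have C2: "br (C1 v) C = CHi 2 (\<lambda>xs. f (v#xs))" for v
    using ba_ins2[OF B cf] by (simp add: csign_def C_def)
  define Dx :: "('a,'e) cochain" where "Dx = CHi 2 (\<lambda>xs. f (x#xs))"
  define Dy :: "('a,'e) cochain" where "Dy = CHi 2 (\<lambda>xs. f (y#xs))"
  have E1m: "br Dx C \<in> cset S 3"
    using ba_mem[OF B _ _ Dm Cm, of x] by (simp add: Dx_def)
  then obtain e where E1: "br Dx C = CHi 3 e" and ec: "is_cochain S 3 e"
    using cset_hi[of 3 "br Dx C"] by auto
  have CCm: "br C C \<in> cset S 4" using ba_mem[OF B _ _ Cm Cm] by simp
  then obtain G where G: "br C C = CHi 4 G" and Gc: "is_cochain S 4 G"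
    using cset_hi[of 4 "br C C"] by auto
  have skew: "br C Dx = cuminus (br Dx C)"
    using ba_skew[OF B _ _ Cm Dm, of x] by (simp add: csign_def Dx_def)
  have "br (br C C) (C1 x) = cadd (csign 3 (br (br C (C1 x)) C)) (br C (br C (C1 x)))"
    using ba_leib[OF B _ _ Cm Cm] by simp
  also have "\<dots> = CHi 3 (\<lambda>xs. - e xs + - e xs)"
    using skew E1 by (simp add: D csign_def Dx_def[symmetric])
  finally have "CHi 3 (\<lambda>xs. G (x#xs)) = CHi 3 (\<lambda>xs. - e xs + - e xs)"
    using ba_ins1[OF B Gc] G by simp
  hence Gx: "G [x,y,z] = - e [y,z] + - e [y,z]" by (metis cochain.inject(4))
  have DDm: "br Dx Dy \<in> cset S 2" using ba_mem[OF B _ _ Dm Dm, of x y] by (simp add: Dx_def Dy_def)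
  then obtain k where K: "br Dx Dy = CHi 2 k" and kc: "is_cochain S 2 k"
    using cset_hi[of 2 "br Dx Dy"] by auto
  have "br (br Dx C) (C1 y) = cadd (csign 3 (br (br Dx (C1 y)) C)) (br Dx (br C (C1 y)))"
    using ba_leib[OF B _ _ Dm Cm, of x] by (simp add: Dx_def)
  also have "\<dots> = CHi 2 (\<lambda>xs. - f (f[x,y] # xs) + k xs)"
    using K by (simp add: D D1 C2 csign_def Dx_def Dy_def[symmetric])
  finally have "CHi 2 (\<lambda>xs. e (y#xs)) = CHi 2 (\<lambda>xs. - f (f[x,y] # xs) + k xs)"
    using ba_ins1[OF B ec] E1 by simp
  hence ey: "e [y,z] = - f [f[x,y], z] + k [z]" by (metis cochain.inject(4))
  have "br (br Dx Dy) (C1 z) = cadd (csign 2 (br (br Dx (C1 z)) Dy)) (br Dx (br Dy (C1 z)))"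
    using ba_leib[OF B _ _ Dm Dm, of x y] by (simp add: Dx_def Dy_def)
  also have "\<dots> = C1 (- f [y, f[x,z]] + f [x, f[y,z]])"
    by (simp add: D1 D2 csign_def Dx_def Dy_def)
  finally have "k [z] = - f [y, f[x,z]] + f [x, f[y,z]]"
    using ba_ins1[OF B kc] K by simp
  with ey Gx G CCm show ?thesis by (simp add: C_def)
qed

end


lemma two_cancel:
  fixes S :: "('r::comm_ring_1, 'a::comm_ring_1, 'e::ab_group_add) ipm" and v :: 'e
  assumes "contains_rationals TYPE('r)" "ipmod S" "v + v = 0"
  shows "v = 0"
proof -
  obtain y :: 'r where y: "of_nat 2 * y = 1" using assms(1) unfolding contains_rationals_def by (metis zero_less_numeral of_nat_numeral)
  have ca: "comm_algebra S" and md: "is_module S" using assms(2) by (auto simp: ipmod_def)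
  have sa: "smul S a (x + w) = smul S a x + smul S a w" for a x w using md by (simp add: is_module_def)
  have sb: "smul S (a + b) x = smul S a x + smul S b x" for a b x using md by (simp add: is_module_def)
  have s1: "smul S 1 x = x" for x using md by (simp add: is_module_def)
  have s0: "smul S a 0 = 0" for a using sa[of a 0 0] by simp
  have al: "alg S (r + s) = alg S r + alg S s" "alg S 1 = 1" for r s using ca by (auto simp: comm_algebra_def)
  have "y + y = 1" using y by (simp add: algebra_simps)
  hence "alg S y + alg S y = 1" using al(1)[of y y] al(2) by simp
  have "0 = smul S (alg S y) (v + v)" using assms(3) s0 by simp
  also have "\<dots> = smul S (alg S y + alg S y) v" by (simp only: sa sb)
  also have "\<dots> = v" using \<open>alg S y + alg S y = 1\<close> s1 by simp
  finally show ?thesis by simp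
qed

lemma czero_add: "1 \<le> n \<Longrightarrow> cadd (czero (int n)) (czero (int n)) = czero (int n)"
  by (auto simp: czero_def)

lemma phi_zero:
  assumes G: "gpa_morphism S1 S2 br1 wd1 br2 wd2 \<Phi>" and n: "1 \<le> n"
    and zm: "czero (int n) \<in> cset S1 (int n)"
  shows "\<Phi> (czero (int n)) = czero (int n)"
proof -
  have mem: "\<Phi> (czero (int n)) \<in> cset S2 (int n)" using G zm unfolding gpa_morphism_def by blast
  have add: "\<Phi> (cadd (czero (int n)) (czero (int n))) = cadd (\<Phi> (czero (int n))) (\<Phi> (czero (int n)))"
    using G zm unfolding gpa_morphism_def by blast
  have zz: "cadd (czero (int n)) (czero (int n)) = czero (int n)"
    using n czero_add by blast
  show ?thesis
  proof (cases "n = 1")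
    case True
    then obtain v where v: "\<Phi> (czero (int n)) = C1 v" using mem by (auto simp: cset1)
    have "\<Phi> (czero (int n)) = cadd (\<Phi> (czero (int n))) (\<Phi> (czero (int n)))" using add by (simp only: czero_add[OF n])
    hence "C1 v = C1 (v + v)" using v by simp
    hence "v = v + v" by (simp only: cochain.inject)
    hence "v = 0" by (metis add_cancel_left_right)
    with v True show ?thesis by (simp add: czero_def)
  next
    case False
    hence n2: "2 \<le> n" using n by simp
    then obtain g where g: "\<Phi> (czero (int n)) = CHi n g" using mem cset_hi by blast
    have "\<Phi> (czero (int n)) = cadd (\<Phi> (czero (int n))) (\<Phi> (czero (int n)))" using add by (simp only: czero_add[OF n])
    hence "CHi n g = cadd (CHi n g) (CHi n g)" using g by simp
    hence "CHi n g = CHi n (\<lambda>xs. g xs + g xs)" by simp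
    hence "g = (\<lambda>xs. g xs + g xs)" by (simp only: cochain.inject)
    hence "\<And>xs. g xs = g xs + g xs" by metis
    hence "\<And>xs. g xs = 0" by (metis add_cancel_left_right)
    hence "g = (\<lambda>_. 0)" by auto
    with g n2 show ?thesis by (simp add: czero_def)
  qed
qed


lemma gpa_mem: "gpa_morphism S1 S2 br1 wd1 br2 wd2 \<Phi> \<Longrightarrow> c \<in> cset S1 (int k) \<Longrightarrow> \<Phi> c \<in> cset S2 (int k)"
  unfolding gpa_morphism_def by blast
lemma gpa_add: "gpa_morphism S1 S2 br1 wd1 br2 wd2 \<Phi> \<Longrightarrow> c \<in> cset S1 (int k) \<Longrightarrow> c' \<in> cset S1 (int k) \<Longrightarrow> \<Phi> (cadd c c') = cadd (\<Phi> c) (\<Phi> c')"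
  unfolding gpa_morphism_def by blast
lemma gpa_scal: "gpa_morphism S1 S2 br1 wd1 br2 wd2 \<Phi> \<Longrightarrow> c \<in> cset S1 (int k) \<Longrightarrow> \<Phi> (cscal S1 t c) = cscal S2 t (\<Phi> c)"
  unfolding gpa_morphism_def by blast
lemma gpa_wd: "gpa_morphism S1 S2 br1 wd1 br2 wd2 \<Phi> \<Longrightarrow> c \<in> cset S1 (int r) \<Longrightarrow> d \<in> cset S1 (int s) \<Longrightarrow> \<Phi> (wd1 c d) = wd2 (\<Phi> c) (\<Phi> d)"
  unfolding gpa_morphism_def by blast
lemma gpa_br: "gpa_morphism S1 S2 br1 wd1 br2 wd2 \<Phi> \<Longrightarrow> 2 \<le> r + s \<Longrightarrow> c \<in> cset S1 (int r) \<Longrightarrow> d \<in> cset S1 (int s) \<Longrightarrow> \<Phi> (br1 c d) = br2 (\<Phi> c) (\<Phi> d)"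
  unfolding gpa_morphism_def by blast

lemma wd_00: "wedge_ax S br wd \<Longrightarrow> wd (C0 a) (C0 b) = C0 (a * b)"
  unfolding wedge_ax_def by (elim conjE) meson
lemma wd_01: "wedge_ax S br wd \<Longrightarrow> wd (C0 a) (C1 x) = C1 (smul S a x)"
  unfolding wedge_ax_def by (elim conjE) meson

lemma br2:
  fixes S :: "('r::comm_ring_1, 'a::comm_ring_1, 'e::ab_group_add) ipm"
    and br :: "('a, 'e) cochain \<Rightarrow> ('a, 'e) cochain \<Rightarrow> ('a, 'e) cochain"
  assumes B: "bracket_ax S br" and cf: "is_cochain S 3 f"
  shows "br (CHi 3 f) (C1 x) = CHi 2 (\<lambda>xs. f (x#xs)) \<and> is_cochain S 2 (\<lambda>xs. f (x#xs))
     \<and> br (br (CHi 3 f) (C1 x)) (C1 y) = C1 (f [x,y])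
     \<and> br (CHi 2 (\<lambda>xs. f (x#xs))) (C1 y) = C1 (f [x,y])"
proof -
  have Cm: "CHi 3 f \<in> cset S 3" using cf cset_hi_iff[of 3 f S] by simp
  have D: "br (CHi 3 f) (C1 x) = CHi 2 (\<lambda>xs. f (x#xs))"
    using ba_ins1[OF B cf] by simp
  have Dm: "CHi 2 (\<lambda>xs. f (x#xs)) \<in> cset S 2"
    using ba_mem[OF B _ _ Cm C1_mem, of x] D by simp
  have Dc: "is_cochain S 2 (\<lambda>xs. f (x#xs))"
    using Dm cset_hi_iff[of 2 _ S] by simp
  show ?thesis using D Dc ba_ins1[OF B Dc] by simp
qed

lemma sym_shift: "is_symbol S 3 f \<sigma> \<Longrightarrow> is_symbol S 2 (\<lambda>xs. f (x#xs)) (\<lambda>xs. \<sigma> (x#xs))"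
  unfolding is_symbol_def
  apply (intro conjI allI impI)
      apply simp_all
  done


theorem mainTheorem12:
  fixes SE :: "('r::comm_ring_1, 'a::comm_ring_1, 'e::ab_group_add) ipm"
    and SF :: "('r, 'b::comm_ring_1, 'f::ab_group_add) ipm"
    and brE wdE :: "('a, 'e) cochain \<Rightarrow> ('a, 'e) cochain \<Rightarrow> ('a, 'e) cochain"
    and brF wdF :: "('b, 'f) cochain \<Rightarrow> ('b, 'f) cochain \<Rightarrow> ('b, 'f) cochain"
    and m :: "('a, 'e) cochain"
    and \<Phi> :: "('a, 'e) cochain \<Rightarrow> ('b, 'f) cochain"
  assumes "contains_rationals TYPE('r)"
    and "ipmod SE" and "ipmod SF"
    and "bracket_ax SE brE" and "wedge_ax SE brE wdE"
    and "bracket_ax SF brF" and "wedge_ax SF brF wdF"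
    and "courant SE m"
    and "gpa_morphism SE SF brE wdE brF wdF \<Phi>"
  shows "courant SF (\<Phi> m)
    \<and> (\<forall>\<sigma> \<sigma>'. is_symbol SE 3 (chfun m) \<sigma> \<and> is_symbol SF 3 (chfun (\<Phi> m)) \<sigma>' \<longrightarrow>
         courant_morphism SE SF
           (\<lambda>x y. chfun m [x, y]) (\<lambda>x a. \<sigma> [x] a)
           (\<lambda>x y. chfun (\<Phi> m) [x, y]) (\<lambda>x a. \<sigma>' [x] a)
           (\<lambda>a. c0val (\<Phi> (C0 a))) (\<lambda>x. c1val (\<Phi> (C1 x))))
    \<and> induces_cohomology_map SE SF (brE m) (brF (\<Phi> m)) \<Phi>"
proof -
  note BE = assms(4) and BF = assms(6) and WE = assms(5) and WF = assms(7) and G = assms(9)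
  have mm: "m \<in> cset SE 3" using assms(8) unfolding courant_def by blast
  then obtain f where mf: "m = CHi 3 f" and fc: "is_cochain SE 3 f" using cset_hi[of 3 m SE] by auto
  have jacE0: "\<forall>x y z. chfun m [x, chfun m [y, z]] = chfun m [chfun m [x, y], z] + chfun m [y, chfun m [x, z]]"
    using assms(8) unfolding courant_def by blast
  have jacE: "f [x, f [y,z]] = f [f [x,y], z] + f [y, f [x,z]]" for x y z
    using jacE0[unfolded mf chfun.simps] by blast
  have Phim: "\<Phi> m \<in> cset SF 3" using gpa_mem[OF G, of m 3] mm by simp
  then obtain f' where mf': "\<Phi> m = CHi 3 f'" and fc': "is_cochain SF 3 f'" using cset_hi[of 3 "\<Phi> m" SF] by auto
  obtain Gf where Gf: "brE m m = CHi 4 Gf" and Gfc: "is_cochain SE 4 Gf"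
    using jac[OF BE fc] mf cset_hi[of 4 "brE m m" SE] by auto
  have "Gf xs = 0" for xs
  proof (cases "length xs = 3")
    case True
    then obtain x y z where xs: "xs = [x,y,z]" by (auto simp: numeral_3_eq_3 length_Suc_conv)
    have "Gf xs = - (- f [f[x,y],z] + (- f[y,f[x,z]] + f[x,f[y,z]])) + - (- f [f[x,y],z] + (- f[y,f[x,z]] + f[x,f[y,z]]))"
      using jac[OF BE fc, of x y z] mf Gf xs by simp
    also have "\<dots> = 0" using jacE[of x y z] by simp
    finally show ?thesis .
  next
    case False
    then show ?thesis using Gfc by (simp add: is_cochain_def)
  qed
  hence mmE: "brE m m = czero 4" using Gf by (simp add: czero_def fun_eq_iff)
  have z4: "czero (int 4) \<in> cset SE (int 4)" using jac[OF BE fc] mf mmE by simp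
  have "brF (\<Phi> m) (\<Phi> m) = \<Phi> (brE m m)" using gpa_br[OF G, of 3 3 m m] mm by simp
  also have "\<dots> = czero 4" using mmE phi_zero[OF G, of 4] z4 by simp
  finally have mmF: "brF (CHi 3 f') (CHi 3 f') = czero 4" using mf' by simp
  have jacF: "f' [x, f' [y,z]] = f' [f' [x,y], z] + f' [y, f' [x,z]]" for x y z
  proof -
    define J where "J = - f' [f'[x,y],z] + (- f'[y,f'[x,z]] + f'[x,f'[y,z]])"
    have "- J + - J = 0" using jac[OF BF fc', of x y z] mmF by (simp add: czero_def J_def)
    hence "- J = 0" using two_cancel[OF assms(1) assms(3)] by blast
    hence "J = 0" by simp
    thus ?thesis unfolding J_def by (simp add: algebra_simps eq_neg_iff_add_eq_0)
  qed
  have part1: "courant SF (\<Phi> m)" unfolding courant_def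
    by (intro conjI Phim allI) (unfold mf' chfun.simps, rule jacF)
  define \<phi> where "\<phi> a = c0val (\<Phi> (C0 a))" for a
  define \<psi> where "\<psi> x = c1val (\<Phi> (C1 x))" for x
  have P0: "\<Phi> (C0 a) = C0 (\<phi> a)" for a
  proof -
    have "\<Phi> (C0 a) \<in> cset SF 0" using gpa_mem[OF G, of "C0 a" 0] by (simp add: cset0)
    then obtain b where "\<Phi> (C0 a) = C0 b" by (auto simp: cset0)
    thus ?thesis by (simp add: \<phi>_def)
  qed
  have P1: "\<Phi> (C1 x) = C1 (\<psi> x)" for x
  proof -
    have "\<Phi> (C1 x) \<in> cset SF 1" using gpa_mem[OF G, of "C1 x" 1] by (simp add: cset1)
    then obtain b where "\<Phi> (C1 x) = C1 b" by (auto simp: cset1)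
    thus ?thesis by (simp add: \<psi>_def)
  qed
  have part2: "courant_morphism SE SF
           (\<lambda>x y. chfun m [x, y]) (\<lambda>x a. \<sigma> [x] a)
           (\<lambda>x y. chfun (\<Phi> m) [x, y]) (\<lambda>x a. \<sigma>' [x] a)
           (\<lambda>a. c0val (\<Phi> (C0 a))) (\<lambda>x. c1val (\<Phi> (C1 x)))"
    if sE: "is_symbol SE 3 (chfun m) \<sigma>" and sF: "is_symbol SF 3 (chfun (\<Phi> m)) \<sigma>'" for \<sigma> \<sigma>'
  proof -
    have a1: "\<phi> (a + b) = \<phi> a + \<phi> b" for a b
      using gpa_add[OF G, of "C0 a" 0 "C0 b"] P0 by (simp add: cset0 cset1)
    have a2: "\<phi> (alg SE t * a) = alg SF t * \<phi> a" for t a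
      using gpa_scal[OF G, of "C0 a" 0 t] P0 by (simp add: cset0 cset1)
    have a3: "\<psi> (x + y) = \<psi> x + \<psi> y" for x y
      using gpa_add[OF G, of "C1 x" 1 "C1 y"] P1 by (simp add: cset0 cset1)
    have a4: "\<psi> (smul SE (alg SE t) x) = smul SF (alg SF t) (\<psi> x)" for t x
      using gpa_scal[OF G, of "C1 x" 1 t] P1 by (simp add: cset0 cset1)
    have a5: "\<phi> (a * b) = \<phi> a * \<phi> b" for a b
      using gpa_wd[OF G, of "C0 a" 0 "C0 b" 0] P0 wd_00[OF WE] wd_00[OF WF] by (simp add: cset0 cset1)
    have a6: "\<psi> (smul SE a x) = smul SF (\<phi> a) (\<psi> x)" for a x
      using gpa_wd[OF G, of "C0 a" 0 "C1 x" 1] P0 P1 wd_01[OF WE] wd_01[OF WF] by (simp add: cset0 cset1)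
    have a7: "\<psi> (f [x,y]) = f' [\<psi> x, \<psi> y]" for x y
    proof -
      have Dm: "brE m (C1 x) \<in> cset SE 2" using ba_mem[OF BE _ _ mm C1_mem, of x] by simp
      have "\<Phi> (brE (brE m (C1 x)) (C1 y)) = brF (\<Phi> (brE m (C1 x))) (\<Phi> (C1 y))"
        using gpa_br[OF G, of 2 1 "brE m (C1 x)" "C1 y"] Dm by (simp add: cset1 cset0 cset1)
      also have "\<dots> = brF (brF (\<Phi> m) (C1 (\<psi> x))) (C1 (\<psi> y))"
        using gpa_br[OF G, of 3 1 m "C1 x"] mm P1 by (simp add: cset0 cset1 cset0 cset1)
      finally have "\<Phi> (C1 (f [x,y])) = C1 (f' [\<psi> x, \<psi> y])"
        using br2[OF BE fc] br2[OF BF fc'] mf mf' by (simp add: cset0 cset1 cset0 cset1)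
      thus ?thesis using P1 by simp
    qed
    have a8: "\<phi> (\<sigma> [x] a) = \<sigma>' [\<psi> x] (\<phi> a)" for x a
    proof -
      have Dm: "brE m (C1 x) \<in> cset SE 2" using ba_mem[OF BE _ _ mm C1_mem, of x] by simp
      have sE': "is_symbol SE 2 (\<lambda>xs. f (x#xs)) (\<lambda>xs. \<sigma> (x#xs))" using sym_shift[OF sE] mf by simp
      have sF': "is_symbol SF 2 (\<lambda>xs. f' (\<psi> x#xs)) (\<lambda>xs. \<sigma>' (\<psi> x#xs))" using sym_shift[OF sF] mf' by simp
      have "\<Phi> (brE (brE m (C1 x)) (C0 a)) = brF (\<Phi> (brE m (C1 x))) (\<Phi> (C0 a))"
        using gpa_br[OF G, of 2 0 "brE m (C1 x)" "C0 a"] Dm by (simp add: cset0 cset0 cset1)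
      also have "\<dots> = brF (brF (\<Phi> m) (C1 (\<psi> x))) (C0 (\<phi> a))"
        using gpa_br[OF G, of 3 1 m "C1 x"] mm P1 P0 by (simp add: cset0 cset1 cset0 cset1)
      finally have "\<Phi> (C0 (\<sigma> [x] a)) = C0 (\<sigma>' [\<psi> x] (\<phi> a))"
        using br2[OF BE fc] br2[OF BF fc'] mf mf' ba_sym2[OF BE _ sE'] ba_sym2[OF BF _ sF'] by (simp add: cset0 cset1 cset0 cset1)
      thus ?thesis using P0 by simp
    qed
    have a9: "\<phi> (ip SE x y) = ip SF (\<psi> x) (\<psi> y)" for x y
      using gpa_br[OF G, of 1 1 "C1 x" "C1 y"] P0 P1 ba_ip[OF BE] ba_ip[OF BF] by (simp add: cset0 cset1)
    show ?thesis unfolding courant_morphism_def \<phi>_def[symmetric] \<psi>_def[symmetric]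
      using a1 a2 a3 a4 a5 a6 a7 a8 a9 mf mf' by (simp add: cset0 cset1 cset0 cset1)
  qed
  have part3: "induces_cohomology_map SE SF (brE m) (brF (\<Phi> m)) \<Phi>"
    unfolding induces_cohomology_map_def
  proof (intro conjI allI ballI impI)
    fix k :: nat and c assume c: "c \<in> cset SE (int k)" and z: "brE m c = czero (int k + 1)"
    have mem: "brE m c \<in> cset SE (int (Suc k))" using ba_mem[OF BE _ _ mm c] by simp
    have "brF (\<Phi> m) (\<Phi> c) = \<Phi> (brE m c)" using gpa_br[OF G, of 3 k m c] mm c by simp
    also have "\<dots> = czero (int (Suc k))" using phi_zero[OF G, of "Suc k"] mem z by (simp add: add.commute)
    finally show "brF (\<Phi> m) (\<Phi> c) = czero (int k + 1)" by (simp add: add.commute)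
  next
    fix k :: nat and b assume b: "b \<in> cset SE (int k)"
    show "\<exists>b'\<in>cset SF (int k). \<Phi> (brE m b) = brF (\<Phi> m) b'"
      using gpa_br[OF G, of 3 k m b] mm b gpa_mem[OF G b] by auto
  qed
  show ?thesis using part1 part2 part3 by blast
qed

end
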